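(* Let $a,b,c,d$ be independent random integers, each uniformly distributed on $\{0,1,\ldots,999\}$, and let $e=a+b+c+d$. Write $a=100a_1+10a_2+a_3$ with digits $a_1,a_2,a_3\in\{0,\ldots,9\}$, and $e=1000e_0+100e_1+10e_2+e_3$ with $e_0\in\{0,1,2,3\}$ and $e_1,e_2,e_3\in\{0,\ldots,9\}$. For $i\in\{1,2,3\}$ define the carry $$c_{i-1}=\left\lfloor \frac{(a \bmod 10^{4-i})+(b \bmod 10^{4-i})+(c \bmod 10^{4-i})+(d \bmod 10^{4-i})}{10^{4-i}}\right\rfloor\in\{0,1,2,3\}.$$ Then $I(a_1;e_0)>0$, and $I(a_i;e_j)=0$ for all $i\in\{1,2,3\}$ and $j\in\{1,2,3\}$. Moreover, $I(a_i;e_i\mid c_{i-1})>0$ for $i=1,2,3$.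
   Context: $I(X;Y)$ denotes the mutual information and $I(X;Y\mid Z)$ the conditional mutual information of discrete random variables. Digits are indexed so that smaller subscripts correspond to higher place values ($a_1$ is the hundreds digit of $a$, $e_0$ the thousands digit of $e$). The quantity $c_{i-1}$ is the carry propagated from digit place $i$ into the next higher place $i-1$ when adding $a,b,c,d$ column by column (including carries from lower places); it is not a digit of the operand $c$. *)

theory Defs
  imports "HOL-Probability.Probability"
begin

definition dprob :: "'w pmf \<Rightarrow> ('w \<Rightarrow> bool) \<Rightarrow> real" where
  "dprob p P = measure_pmf.prob p {w. P w}"

definition mutual_info :: "'w pmf \<Rightarrow> ('w \<Rightarrow> 'a) \<Rightarrow> ('w \<Rightarrow> 'b) \<Rightarrow> real" where
  "mutual_info p X Y =
     (\<Sum>x\<in>X ` set_pmf p. \<Sum>y\<in>Y ` set_pmf p.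
        let pxy = dprob p (\<lambda>w. X w = x \<and> Y w = y);
            px = dprob p (\<lambda>w. X w = x);
            py = dprob p (\<lambda>w. Y w = y)
        in if pxy = 0 then 0 else pxy * log 2 (pxy / (px * py)))"

definition cond_mutual_info ::
  "'w pmf \<Rightarrow> ('w \<Rightarrow> 'a) \<Rightarrow> ('w \<Rightarrow> 'b) \<Rightarrow> ('w \<Rightarrow> 'c) \<Rightarrow> real" where
  "cond_mutual_info p X Y Z =
     (\<Sum>x\<in>X ` set_pmf p. \<Sum>y\<in>Y ` set_pmf p. \<Sum>z\<in>Z ` set_pmf p.
        let pxyz = dprob p (\<lambda>w. X w = x \<and> Y w = y \<and> Z w = z);
            pxz = dprob p (\<lambda>w. X w = x \<and> Z w = z);
            pyz = dprob p (\<lambda>w. Y w = y \<and> Z w = z);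
            pz = dprob p (\<lambda>w. Z w = z)
        in if pxyz = 0 then 0 else pxyz * log 2 (pz * pxyz / (pxz * pyz)))"

definition abcd :: "(nat \<times> nat \<times> nat \<times> nat) pmf" where
  "abcd = pmf_of_set ({0..<1000} \<times> {0..<1000} \<times> {0..<1000} \<times> {0..<1000})"

definition var_a :: "nat \<times> nat \<times> nat \<times> nat \<Rightarrow> nat" where
  "var_a w = (case w of (a,b,c,d) \<Rightarrow> a)"

definition var_e :: "nat \<times> nat \<times> nat \<times> nat \<Rightarrow> nat" where
  "var_e w = (case w of (a,b,c,d) \<Rightarrow> a + b + c + d)"

definition digit_a :: "nat \<Rightarrow> nat \<times> nat \<times> nat \<times> nat \<Rightarrow> nat" where
  "digit_a i w = (var_a w div 10 ^ (3 - i)) mod 10"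

definition digit_e :: "nat \<Rightarrow> nat \<times> nat \<times> nat \<times> nat \<Rightarrow> nat" where
  "digit_e j w = (if j = 0 then var_e w div 1000 else (var_e w div 10 ^ (3 - j)) mod 10)"

text \<open>carry i w = c_{i-1}, the carry from place i into place i-1 (i = 1,2,3).\<close>
definition carry :: "nat \<Rightarrow> nat \<times> nat \<times> nat \<times> nat \<Rightarrow> nat" where
  "carry i w = (case w of (a,b,c,d) \<Rightarrow>
     (a mod 10 ^ (4 - i) + b mod 10 ^ (4 - i) + c mod 10 ^ (4 - i) + d mod 10 ^ (4 - i))
       div 10 ^ (4 - i))"

end

theory Submission
  imports Defs
begin


lemma dprob_sum:
  assumes "finite (set_pmf p)"
  shows "dprob p P = (\<Sum>w\<in>set_pmf p. if P w then pmf p w else 0)"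
proof -
  have "dprob p P = measure (measure_pmf p) ({w. P w} \<inter> set_pmf p)"
    unfolding dprob_def by (simp add: measure_Int_set_pmf)
  also have "\<dots> = sum (pmf p) ({w. P w} \<inter> set_pmf p)"
    using assms by (simp add: measure_measure_pmf_finite)
  also have "\<dots> = sum (pmf p) {w \<in> set_pmf p. P w}"
    by (rule sum.cong) auto
  also have "\<dots> = (\<Sum>w\<in>set_pmf p. if P w then pmf p w else 0)"
    using assms by (simp add: sum.inter_filter)
  finally show ?thesis .
qed

lemma dprob_nonneg: "dprob p P \<ge> 0"
  unfolding dprob_def by simp

lemma dprob_mono:
  assumes "finite (set_pmf p)" "\<And>w. w \<in> set_pmf p \<Longrightarrow> P w \<Longrightarrow> Q w"
  shows "dprob p P \<le> dprob p Q"
  unfolding dprob_sum[OF assms(1)] by (rule sum_mono) (auto simp: assms(2))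

lemma dprob_zero:
  assumes "finite (set_pmf p)" "\<And>w. w \<in> set_pmf p \<Longrightarrow> \<not> P w"
  shows "dprob p P = 0"
  unfolding dprob_sum[OF assms(1)] using assms(2) by (simp)

lemma dprob_pos:
  assumes "finite (set_pmf p)" "w \<in> set_pmf p" "P w"
  shows "dprob p P > 0"
proof -
  have "0 < (if P w then pmf p w else 0)" using assms by (simp add: pmf_positive)
  also have "\<dots> \<le> (\<Sum>w\<in>set_pmf p. if P w then pmf p w else 0)"
    by (rule member_le_sum) (use assms in auto)
  finally show ?thesis using dprob_sum[OF assms(1)] by simp
qed

lemma dprob_true:
  assumes "finite (set_pmf p)"
  shows "dprob p (\<lambda>w. True) = 1"
  unfolding dprob_def by simp

lemma dprob_marg:
  assumes "finite (set_pmf p)"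
  shows "(\<Sum>x\<in>X ` set_pmf p. dprob p (\<lambda>w. X w = x \<and> Q w)) = dprob p Q"
proof -
  have "(\<Sum>x\<in>X ` set_pmf p. dprob p (\<lambda>w. X w = x \<and> Q w))
     = (\<Sum>x\<in>X ` set_pmf p. \<Sum>w\<in>set_pmf p. if X w = x \<and> Q w then pmf p w else 0)"
    using dprob_sum[OF assms] by simp
  also have "\<dots> = (\<Sum>w\<in>set_pmf p. \<Sum>x\<in>X ` set_pmf p. if X w = x \<and> Q w then pmf p w else 0)"
    by (rule sum.swap)
  also have "\<dots> = (\<Sum>w\<in>set_pmf p. if Q w then pmf p w else 0)"
  proof (rule sum.cong)
    fix w assume w: "w \<in> set_pmf p"
    have "(\<Sum>x\<in>X ` set_pmf p. if X w = x \<and> Q w then pmf p w else 0)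
       = (\<Sum>x\<in>X ` set_pmf p. if X w = x then (if Q w then pmf p w else 0) else 0)"
      by (rule sum.cong) auto
    also have "\<dots> = (if Q w then pmf p w else 0)"
      using w assms by (simp add: sum.delta)
    finally show "(\<Sum>x\<in>X ` set_pmf p. if X w = x \<and> Q w then pmf p w else 0) = (if Q w then pmf p w else 0)" .
  qed simp
  finally show ?thesis using dprob_sum[OF assms] by simp
qed

lemma term_bound:
  fixes q r :: real
  assumes "q \<ge> 0" "r \<ge> 0" "q > 0 \<Longrightarrow> r > 0"
  shows "(q - r) / ln 2 \<le> (if q = 0 then 0 else q * log 2 (q / r))"
    and "q \<noteq> r \<Longrightarrow> (q - r) / ln 2 < (if q = 0 then 0 else q * log 2 (q / r))"
proof -
  have l2: "ln (2::real) > 0" by simp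
  have key: "q - r \<le> (if q = 0 then 0 else q * ln (q / r)) \<and>
     (q \<noteq> r \<longrightarrow> q - r < (if q = 0 then 0 else q * ln (q / r)))"
  proof (cases "q = 0")
    case True then show ?thesis using assms by auto
  next
    case False
    then have q: "q > 0" and r: "r > 0" using assms by auto
    have "ln r - ln q \<le> (r - q) / q" using ln_diff_le[OF r q] .
    then have a: "q * (ln r - ln q) \<le> r - q" using q by (simp add: field_simps)
    have b: "q \<noteq> r \<Longrightarrow> q * (ln r - ln q) < r - q"
      using ln_diff_less[OF r q] q by (simp add: field_simps)
    have "q * ln (q / r) = q * (ln q - ln r)" using q r by (simp add: ln_div)
    then have "q * ln (q / r) = - (q * (ln r - ln q))" by (simp add: algebra_simps)
    then show ?thesis using a b False by auto
  qed
  have eq: "(if q = 0 then 0 else q * log 2 (q / r)) = (if q = 0 then 0 else q * ln (q / r)) / ln 2"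
    by (simp add: log_def)
  show "(q - r) / ln 2 \<le> (if q = 0 then 0 else q * log 2 (q / r))"
    unfolding eq using key l2 by (simp add: divide_right_mono)
  show "q \<noteq> r \<Longrightarrow> (q - r) / ln 2 < (if q = 0 then 0 else q * log 2 (q / r))"
    unfolding eq using key l2 by (simp add: divide_strict_right_mono)
qed

lemma gibbs:
  fixes q r :: "'s \<Rightarrow> real"
  assumes "finite S" "\<And>s. s \<in> S \<Longrightarrow> q s \<ge> 0" "\<And>s. s \<in> S \<Longrightarrow> r s \<ge> 0"
    "sum q S = 1" "sum r S \<le> 1" "\<And>s. s \<in> S \<Longrightarrow> q s > 0 \<Longrightarrow> r s > 0"
    "sz \<in> S" "q sz \<noteq> r sz"
  shows "(\<Sum>s\<in>S. if q s = 0 then 0 else q s * log 2 (q s / r s)) > 0"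
proof -
  have "(\<Sum>s\<in>S. (q s - r s) / ln 2) < (\<Sum>s\<in>S. if q s = 0 then 0 else q s * log 2 (q s / r s))"
  proof (rule sum_strict_mono_ex1[OF assms(1)])
    show "\<forall>s\<in>S. (q s - r s) / ln 2 \<le> (if q s = 0 then 0 else q s * log 2 (q s / r s))"
    proof
      fix s assume s: "s \<in> S"
      show "(q s - r s) / ln 2 \<le> (if q s = 0 then 0 else q s * log 2 (q s / r s))"
        by (rule term_bound(1)[OF assms(2)[OF s] assms(3)[OF s] assms(6)[OF s]])
    qed
    show "\<exists>s\<in>S. (q s - r s) / ln 2 < (if q s = 0 then 0 else q s * log 2 (q s / r s))"
    proof
      show "(q sz - r sz) / ln 2 < (if q sz = 0 then 0 else q sz * log 2 (q sz / r sz))"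
        by (rule term_bound(2)[OF assms(2)[OF assms(7)] assms(3)[OF assms(7)] assms(6)[OF assms(7)] assms(8)])
    qed (rule assms(7))
  qed
  moreover have "(\<Sum>s\<in>S. (q s - r s) / ln 2) = (sum q S - sum r S) / ln 2"
    by (simp add: sum_divide_distrib[symmetric] sum_subtractf)
  moreover have "(sum q S - sum r S) / ln 2 \<ge> 0" using assms(4,5) by simp
  ultimately show ?thesis by linarith
qed

lemma mi_pos:
  assumes fin: "finite (set_pmf p)"
    and ne: "dprob p (\<lambda>w. X w = x \<and> Y w = y) \<noteq> dprob p (\<lambda>w. X w = x) * dprob p (\<lambda>w. Y w = y)"
  shows "mutual_info p X Y > 0"
proof -
  let ?S = "X ` set_pmf p \<times> Y ` set_pmf p"
  define q where "q = (\<lambda>s. dprob p (\<lambda>w. X w = fst s \<and> Y w = snd s))"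
  define r where "r = (\<lambda>s. dprob p (\<lambda>w. X w = fst s) * dprob p (\<lambda>w. Y w = snd s))"
  have xin: "x \<in> X ` set_pmf p"
  proof (rule ccontr)
    assume "x \<notin> X ` set_pmf p"
    then have "dprob p (\<lambda>w. X w = x) = 0" "dprob p (\<lambda>w. X w = x \<and> Y w = y) = 0"
      by (auto intro!: dprob_zero fin)
    then show False using ne by simp
  qed
  have yin: "y \<in> Y ` set_pmf p"
  proof (rule ccontr)
    assume "y \<notin> Y ` set_pmf p"
    then have "dprob p (\<lambda>w. Y w = y) = 0" "dprob p (\<lambda>w. X w = x \<and> Y w = y) = 0"
      by (auto intro!: dprob_zero fin)
    then show False using ne by simp
  qed
  have "(\<Sum>s\<in>?S. if q s = 0 then 0 else q s * log 2 (q s / r s)) > 0"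
  proof (rule gibbs[where sz="(x,y)"])
    show "finite ?S" using fin by simp
    show "\<And>s. s \<in> ?S \<Longrightarrow> q s \<ge> 0" by (auto simp: q_def dprob_nonneg)
    show "\<And>s. s \<in> ?S \<Longrightarrow> r s \<ge> 0" by (auto simp: r_def dprob_nonneg)
    have sq: "sum q ?S = (\<Sum>x\<in>X ` set_pmf p. \<Sum>y\<in>Y ` set_pmf p. q (x,y))"
      by (simp add: sum.cartesian_product)
    have sr: "sum r ?S = (\<Sum>x\<in>X ` set_pmf p. \<Sum>y\<in>Y ` set_pmf p. r (x,y))"
      by (simp add: sum.cartesian_product)
    show "sum q ?S = 1"
      unfolding sq unfolding q_def fst_conv snd_conv
      using dprob_marg[OF fin, of Y "\<lambda>w. X w = _"] dprob_marg[OF fin, of X "\<lambda>w. True"] dprob_true[OF fin]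
      by (simp add: conj_commute)
    show "sum r ?S \<le> 1"
      unfolding sr unfolding r_def fst_conv snd_conv
      using dprob_marg[OF fin, of Y "\<lambda>w. True"] dprob_marg[OF fin, of X "\<lambda>w. True"] dprob_true[OF fin]
      by (simp add: sum_distrib_left[symmetric] sum_distrib_right[symmetric])
    show "\<And>s. s \<in> ?S \<Longrightarrow> q s > 0 \<Longrightarrow> r s > 0"
    proof -
      fix s assume "s \<in> ?S" "q s > 0"
      then obtain a b where s: "s = (a,b)" and pos: "dprob p (\<lambda>w. X w = a \<and> Y w = b) > 0"
        by (auto simp: q_def)
      have "dprob p (\<lambda>w. X w = a \<and> Y w = b) \<le> dprob p (\<lambda>w. X w = a)"
        "dprob p (\<lambda>w. X w = a \<and> Y w = b) \<le> dprob p (\<lambda>w. Y w = b)"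
        by (auto intro!: dprob_mono fin)
      then show "r s > 0" using pos s by (simp add: r_def)
    qed
    show "(x,y) \<in> ?S" using xin yin by simp
    show "q (x,y) \<noteq> r (x,y)" using ne by (simp add: q_def r_def)
  qed
  moreover have "mutual_info p X Y = (\<Sum>s\<in>?S. if q s = 0 then 0 else q s * log 2 (q s / r s))"
    unfolding mutual_info_def Let_def q_def r_def
    by (simp add: sum.cartesian_product case_prod_unfold)
  ultimately show ?thesis by simp
qed

lemma mi_zero:
  assumes "\<And>x y. dprob p (\<lambda>w. X w = x \<and> Y w = y) = dprob p (\<lambda>w. X w = x) * dprob p (\<lambda>w. Y w = y)"
  shows "mutual_info p X Y = 0"
  unfolding mutual_info_def Let_def
  by (rule sum.neutral, intro ballI, rule sum.neutral) (simp add: assms[symmetric])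



lemma dprob_marg2:
  assumes "finite (set_pmf p)"
  shows "(\<Sum>x\<in>X ` set_pmf p. dprob p (\<lambda>w. Q w \<and> X w = x)) = dprob p Q"
  using dprob_marg[OF assms, of X Q] by (simp add: conj_commute)

lemma cmi_pos:
  assumes fin: "finite (set_pmf p)"
    and z0: "dprob p (\<lambda>w. X w = x \<and> Y w = y \<and> Z w = z) = 0"
    and p1: "dprob p (\<lambda>w. X w = x \<and> Z w = z) > 0"
    and p2: "dprob p (\<lambda>w. Y w = y \<and> Z w = z) > 0"
  shows "cond_mutual_info p X Y Z > 0"
proof -
  let ?X = "X ` set_pmf p" and ?Y = "Y ` set_pmf p" and ?Z = "Z ` set_pmf p"
  let ?S = "?X \<times> ?Y \<times> ?Z"
  define q where "q = (\<lambda>s. dprob p (\<lambda>w. X w = fst s \<and> Y w = fst (snd s) \<and> Z w = snd (snd s)))"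
  define r where "r = (\<lambda>s. dprob p (\<lambda>w. X w = fst s \<and> Z w = snd (snd s))
       * dprob p (\<lambda>w. Y w = fst (snd s) \<and> Z w = snd (snd s)) / dprob p (\<lambda>w. Z w = snd (snd s)))"
  have xin: "x \<in> ?X"
  proof (rule ccontr)
    assume "x \<notin> ?X"
    then have "dprob p (\<lambda>w. X w = x \<and> Z w = z) = 0" by (auto intro!: dprob_zero fin)
    then show False using p1 by simp
  qed
  have yin: "y \<in> ?Y"
  proof (rule ccontr)
    assume "y \<notin> ?Y"
    then have "dprob p (\<lambda>w. Y w = y \<and> Z w = z) = 0" by (auto intro!: dprob_zero fin)
    then show False using p2 by simp
  qed
  have zin: "z \<in> ?Z"
  proof (rule ccontr)
    assume "z \<notin> ?Z"
    then have "dprob p (\<lambda>w. Y w = y \<and> Z w = z) = 0" by (auto intro!: dprob_zero fin)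
    then show False using p2 by simp
  qed
  have pz: "dprob p (\<lambda>w. Z w = z) > 0"
    using p2 dprob_mono[OF fin, of "\<lambda>w. Y w = y \<and> Z w = z" "\<lambda>w. Z w = z"] by auto
  have "(\<Sum>s\<in>?S. if q s = 0 then 0 else q s * log 2 (q s / r s)) > 0"
  proof (rule gibbs[where sz="(x,y,z)"])
    show "finite ?S" using fin by simp
    show "\<And>s. s \<in> ?S \<Longrightarrow> q s \<ge> 0" by (auto simp: q_def dprob_nonneg)
    show "\<And>s. s \<in> ?S \<Longrightarrow> r s \<ge> 0" by (auto simp: r_def dprob_nonneg)
    have sq: "sum q ?S = (\<Sum>a\<in>?X. \<Sum>b\<in>?Y. \<Sum>c\<in>?Z. q (a,b,c))"
      by (simp add: sum.cartesian_product)
    have sr: "sum r ?S = (\<Sum>a\<in>?X. \<Sum>b\<in>?Y. \<Sum>c\<in>?Z. r (a,b,c))"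
      by (simp add: sum.cartesian_product)
    have i1: "\<And>a b. (\<Sum>c\<in>?Z. dprob p (\<lambda>w. X w = a \<and> Y w = b \<and> Z w = c)) = dprob p (\<lambda>w. X w = a \<and> Y w = b)"
      using dprob_marg2[OF fin, of "\<lambda>w. X w = _ \<and> Y w = _" Z] by (simp add: conj_assoc)
    have i2: "\<And>a. (\<Sum>b\<in>?Y. dprob p (\<lambda>w. X w = a \<and> Y w = b)) = dprob p (\<lambda>w. X w = a)"
      using dprob_marg2[OF fin, of "\<lambda>w. X w = _" Y] by simp
    have i3: "(\<Sum>a\<in>?X. dprob p (\<lambda>w. X w = a)) = 1"
      using dprob_marg2[OF fin, of "\<lambda>w. True" X] dprob_true[OF fin] by simp
    show "sum q ?S = 1"
      unfolding sq unfolding q_def fst_conv snd_conv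
      using i1 i2 i3 by simp
    have "sum r ?S = (\<Sum>a\<in>?X. \<Sum>c\<in>?Z. \<Sum>b\<in>?Y. r (a,b,c))"
      unfolding sr by (rule sum.cong[OF refl], rule sum.swap)
    also have "\<dots> = (\<Sum>c\<in>?Z. \<Sum>a\<in>?X. \<Sum>b\<in>?Y. r (a,b,c))"
      by (rule sum.swap)
    also have "\<dots> = (\<Sum>c\<in>?Z. (\<Sum>a\<in>?X. dprob p (\<lambda>w. X w = a \<and> Z w = c))
        * (\<Sum>b\<in>?Y. dprob p (\<lambda>w. Y w = b \<and> Z w = c)) / dprob p (\<lambda>w. Z w = c))"
      by (rule sum.cong[OF refl]) (simp add: r_def sum_product sum_divide_distrib)
    also have "\<dots> = (\<Sum>c\<in>?Z. dprob p (\<lambda>w. Z w = c) * dprob p (\<lambda>w. Z w = c) / dprob p (\<lambda>w. Z w = c))"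
      using dprob_marg[OF fin, of X "\<lambda>w. Z w = _"] dprob_marg[OF fin, of Y "\<lambda>w. Z w = _"] by simp
    also have "\<dots> = (\<Sum>c\<in>?Z. dprob p (\<lambda>w. Z w = c))"
      by (rule sum.cong) auto
    also have "\<dots> = 1"
      using dprob_marg[OF fin, of Z "\<lambda>w. True"] dprob_true[OF fin] by simp
    finally show "sum r ?S \<le> 1" by simp
    show "\<And>s. s \<in> ?S \<Longrightarrow> q s > 0 \<Longrightarrow> r s > 0"
    proof -
      fix s assume "s \<in> ?S" "q s > 0"
      then obtain a b c where s: "s = (a,b,c)" and pos: "dprob p (\<lambda>w. X w = a \<and> Y w = b \<and> Z w = c) > 0"
        by (auto simp: q_def)
      have "dprob p (\<lambda>w. X w = a \<and> Y w = b \<and> Z w = c) \<le> dprob p (\<lambda>w. X w = a \<and> Z w = c)"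
        "dprob p (\<lambda>w. X w = a \<and> Y w = b \<and> Z w = c) \<le> dprob p (\<lambda>w. Y w = b \<and> Z w = c)"
        "dprob p (\<lambda>w. X w = a \<and> Y w = b \<and> Z w = c) \<le> dprob p (\<lambda>w. Z w = c)"
        by (auto intro!: dprob_mono fin)
      then show "r s > 0" using pos s by (simp add: r_def)
    qed
    show "(x,y,z) \<in> ?S" using xin yin zin by simp
    show "q (x,y,z) \<noteq> r (x,y,z)" using z0 p1 p2 pz by (simp add: q_def r_def)
  qed
  moreover have "cond_mutual_info p X Y Z = (\<Sum>s\<in>?S. if q s = 0 then 0 else q s * log 2 (q s / r s))"
  proof -
    have e: "\<And>a b c d::real. d * a / (b * c) = a / (b * c / d)"
      by (case_tac "d = 0"; case_tac "b*c = 0") (auto simp: field_simps)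
    show ?thesis
      unfolding cond_mutual_info_def Let_def q_def r_def
      apply (simp add: sum.cartesian_product case_prod_unfold)
      apply (rule sum.cong[OF refl])
      by (simp only: e)
  qed
  ultimately show ?thesis by simp
qed




lemma key_divmod: "(k::nat) > 0 \<Longrightarrow> (n mod (k * M)) div k = n div k mod M"
  by (simp add: mod_mult2_eq)

lemma div_eq_iff: "(q::nat) > 0 \<Longrightarrow> m div q = n \<longleftrightarrow> n * q \<le> m \<and> m < Suc n * q"
proof
  assume q: "q > 0" and h: "m div q = n"
  have "\<not> m div q < n" using h by simp
  then have "\<not> m < n * q" using div_less_iff_less_mult[OF q] by blast
  moreover have "m div q < Suc n" using h by simp
  then have "m < Suc n * q" using div_less_iff_less_mult[OF q] by blast
  ultimately show "n * q \<le> m \<and> m < Suc n * q" by simp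
next
  assume "q > 0" "n * q \<le> m \<and> m < Suc n * q"
  then show "m div q = n" by (intro div_nat_eqI) (auto simp: mult.commute)
qed

lemma mod4: "((a::nat) mod M + b mod M + c mod M + d mod M) mod M = (a + b + c + d) mod M"
proof -
  have ea: "a = a mod M + M * (a div M)" and eb: "b = b mod M + M * (b div M)"
    and ec: "c = c mod M + M * (c div M)" and ed: "d = d mod M + M * (d div M)" by simp_all
  have "a + b + c + d = (a mod M + b mod M + c mod M + d mod M) + M * (a div M + b div M + c div M + d div M)"
    using ea eb ec ed by (simp add: algebra_simps)
  then have "(a + b + c + d) mod M = ((a mod M + b mod M + c mod M + d mod M) + M * (a div M + b div M + c div M + d div M)) mod M"
    by simp
  also have "\<dots> = (a mod M + b mod M + c mod M + d mod M) mod M" by simp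
  finally show ?thesis by simp
qed

lemma carry_zero:
  fixes a b c d k :: nat
  assumes k: "k > 0"
    and cz: "(a mod (k*10) + b mod (k*10) + c mod (k*10) + d mod (k*10)) div (k*10) = 0"
    and a9: "(a div k) mod 10 = 9"
  shows "((a+b+c+d) div k) mod 10 = 9"
proof -
  define S where "S = a mod (k*10) + b mod (k*10) + c mod (k*10) + d mod (k*10)"
  have S1: "S < k * 10" using cz k by (simp add: S_def div_eq_0_iff)
  have "(a+b+c+d) mod (k*10) = S mod (k*10)" unfolding S_def by (rule mod4[symmetric])
  also have "\<dots> = S" using S1 by simp
  finally have eS: "(a+b+c+d) mod (k*10) = S" .
  have "((a+b+c+d) div k) mod 10 = ((a+b+c+d) mod (k*10)) div k"
    using key_divmod[OF k] by simp
  also have "\<dots> = S div k" using eS by simp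
  also have "\<dots> = 9"
  proof (rule div_nat_eqI)
    have "a mod (k*10) = k * 9 + a mod k" using mod_mult2_eq[of a k 10] a9 by simp
    then show "k * 9 \<le> S" unfolding S_def by linarith
    show "S < k * Suc 9" using S1 by simp
  qed
  finally show ?thesis .
qed

lemma da1: "(a::nat) < 1000 \<Longrightarrow> (a div 100 mod 10 = x) \<longleftrightarrow> (x * 100 \<le> a \<and> a < Suc x * 100)"
proof -
  assume a: "a < 1000"
  have "a div 100 < 10" using a by (simp add: div_less_iff_less_mult)
  then have "a div 100 mod 10 = a div 100" by simp
  then show ?thesis using div_eq_iff[of 100 a x] by simp
qed

lemma de_mod: "j \<in> {1,2,3} \<Longrightarrow> ((e::nat) div 10^(3-j)) mod 10 = (e mod 1000 div 10^(3-j)) mod 10"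
proof -
  assume "j \<in> {1,2,3}"
  then consider "j = 1" | "j = 2" | "j = 3" by auto
  then show ?thesis
  proof cases
    case 1 then show ?thesis using key_divmod[of 100 e 10] by simp
  next
    case 2
    have "e mod 1000 div 10 = e div 10 mod 100" using key_divmod[of 10 e 100] by simp
    then show ?thesis using 2 by (simp add: mod_mod_cancel)
  next
    case 3 then show ?thesis by (simp add: mod_mod_cancel)
  qed
qed


definition U :: "nat set" where "U = {0..<1000}"
definition Om :: "(nat \<times> nat \<times> nat \<times> nat) set" where "Om = U \<times> U \<times> U \<times> U"

lemma finU: "finite U" and cardU: "card U = 1000" by (auto simp: U_def)
lemma finOm: "finite Om" by (simp add: Om_def finU)
lemma cardOm: "card Om = 10^12" by (simp add: Om_def card_cartesian_product cardU)
lemma Om_ne: "Om \<noteq> {}" by (auto simp: Om_def U_def)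

lemma abcd_Om: "abcd = pmf_of_set Om" by (simp add: abcd_def Om_def U_def)
lemma set_abcd: "set_pmf abcd = Om" using finOm Om_ne by (simp add: abcd_Om)
lemma fin_abcd: "finite (set_pmf abcd)" by (simp add: set_abcd finOm)

lemma dprob_abcd: "dprob abcd P = real (card {w\<in>Om. P w}) / 10^12"
proof -
  have "dprob abcd P = real (card (Om \<inter> {w. P w})) / real (card Om)"
    unfolding dprob_def abcd_Om using finOm Om_ne by (simp add: measure_pmf_of_set)
  moreover have "Om \<inter> {w. P w} = {w\<in>Om. P w}" by auto
  ultimately show ?thesis by (simp add: cardOm)
qed

lemma bij_shift: "bij_betw (\<lambda>b. (b + t) mod 1000) U U"
proof -
  have inj: "inj_on (\<lambda>b. (b + t) mod 1000) U"
  proof (rule inj_onI)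
    fix x y assume "x \<in> U" "y \<in> U" "(x + t) mod 1000 = (y + t) mod 1000"
    then have "x mod 1000 = y mod 1000" by (simp add: mod_eq_iff_dvd_symdiff_nat)
    then show "x = y" using \<open>x \<in> U\<close> \<open>y \<in> U\<close> unfolding U_def by simp
  qed
  have sub: "(\<lambda>b. (b + t) mod 1000) ` U \<subseteq> U" by (auto simp: U_def)
  have "(\<lambda>b. (b + t) mod 1000) ` U = U"
    using endo_inj_surj[OF finU sub inj] .
  then show ?thesis using inj by (simp add: bij_betw_def)
qed

lemma card_filter_sum: "finite S \<Longrightarrow> card {x\<in>S. P x} = (\<Sum>x\<in>S. if P x then 1 else 0)"
  by (simp add: sum.inter_filter[symmetric])

lemma sum_Om: "(\<Sum>w\<in>Om. g w) = (\<Sum>a\<in>U. \<Sum>b\<in>U. \<Sum>c\<in>U. \<Sum>d\<in>U. g (a,b,c,d))"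
  by (simp add: Om_def sum.cartesian_product case_prod_unfold)

lemma count_indep:
  "card {w\<in>Om. A (var_a w) \<and> B (var_e w mod 1000)} = card {a\<in>U. A a} * card {m\<in>U. B m} * 10^6"
proof -
  let ?f = "\<lambda>a b c d. (if A a \<and> B ((a + b + c + d) mod 1000) then 1 else 0) :: nat"
  have "card {w\<in>Om. A (var_a w) \<and> B (var_e w mod 1000)}
      = (\<Sum>a\<in>U. \<Sum>b\<in>U. \<Sum>c\<in>U. \<Sum>d\<in>U. ?f a b c d)"
    by (simp add: card_filter_sum finOm sum_Om var_a_def var_e_def)
  also have "\<dots> = (\<Sum>a\<in>U. \<Sum>c\<in>U. \<Sum>d\<in>U. \<Sum>b\<in>U. ?f a b c d)"
  proof (rule sum.cong[OF refl])
    fix a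
    have "(\<Sum>b\<in>U. \<Sum>c\<in>U. \<Sum>d\<in>U. ?f a b c d) = (\<Sum>c\<in>U. \<Sum>b\<in>U. \<Sum>d\<in>U. ?f a b c d)"
      by (rule sum.swap)
    also have "\<dots> = (\<Sum>c\<in>U. \<Sum>d\<in>U. \<Sum>b\<in>U. ?f a b c d)"
      by (rule sum.cong[OF refl], rule sum.swap)
    finally show "(\<Sum>b\<in>U. \<Sum>c\<in>U. \<Sum>d\<in>U. ?f a b c d) = (\<Sum>c\<in>U. \<Sum>d\<in>U. \<Sum>b\<in>U. ?f a b c d)" .
  qed
  also have "\<dots> = (\<Sum>a\<in>U. \<Sum>c\<in>U. \<Sum>d\<in>U. (if A a then card {m\<in>U. B m} else 0))"
  proof (intro sum.cong refl)
    fix a c d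
    have "(\<Sum>b\<in>U. ?f a b c d) = (\<Sum>b\<in>U. (\<lambda>m. if A a \<and> B m then 1 else 0) ((b + (a + c + d)) mod 1000))"
      by (rule sum.cong) (simp_all add: ac_simps)
    also have "\<dots> = (\<Sum>m\<in>U. if A a \<and> B m then 1 else 0)"
      by (rule sum.reindex_bij_betw[OF bij_shift])
    also have "\<dots> = (if A a then card {m\<in>U. B m} else 0)"
      by (simp add: card_filter_sum finU)
    finally show "(\<Sum>b\<in>U. ?f a b c d) = (if A a then card {m\<in>U. B m} else 0)" .
  qed
  also have "\<dots> = (\<Sum>a\<in>U. if A a then card {m\<in>U. B m} * 10^6 else 0)"
    by (rule sum.cong) (simp_all add: cardU)
  also have "\<dots> = card {a\<in>U. A a} * (card {m\<in>U. B m} * 10^6)"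
    by (simp add: sum.inter_filter[symmetric] finU)
  finally show ?thesis by simp
qed

lemma indep:
  "dprob abcd (\<lambda>w. A (var_a w) \<and> B (var_e w mod 1000))
   = dprob abcd (\<lambda>w. A (var_a w)) * dprob abcd (\<lambda>w. B (var_e w mod 1000))"
proof -
  have c1: "card {w\<in>Om. A (var_a w)} = card {a\<in>U. A a} * 1000 * 10^6"
    using count_indep[of A "\<lambda>_. True"] by (simp add: cardU)
  have c2: "card {w\<in>Om. B (var_e w mod 1000)} = 1000 * card {m\<in>U. B m} * 10^6"
    using count_indep[of "\<lambda>_. True" B] by (simp add: cardU)
  show ?thesis unfolding dprob_abcd count_indep c1 c2 by simp
qed

lemma digit_e_mod: "j \<in> {1,2,3} \<Longrightarrow> digit_e j w = (var_e w mod 1000 div 10^(3-j)) mod 10"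
  unfolding digit_e_def using de_mod[of j "var_e w"] by auto

lemma part2: "\<forall>i\<in>{1,2,3}. \<forall>j\<in>{1,2,3}. mutual_info abcd (digit_a i) (digit_e j) = 0"
proof (intro ballI)
  fix i j :: nat assume j: "j \<in> {1,2,3}"
  show "mutual_info abcd (digit_a i) (digit_e j) = 0"
  proof (rule mi_zero)
    fix x y
    show "dprob abcd (\<lambda>w. digit_a i w = x \<and> digit_e j w = y) =
      dprob abcd (\<lambda>w. digit_a i w = x) * dprob abcd (\<lambda>w. digit_e j w = y)"
      using indep[of "\<lambda>v. (v div 10^(3-i)) mod 10 = x" "\<lambda>m. (m div 10^(3-j)) mod 10 = y"]
      by (simp add: digit_e_mod[OF j] digit_a_def)
  qed
qed


lemma inOm: "(a,b,c,d) \<in> Om \<longleftrightarrow> a < 1000 \<and> b < 1000 \<and> c < 1000 \<and> d < 1000"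
  by (simp add: Om_def U_def)

lemma cmi3: "cond_mutual_info abcd (digit_a 3) (digit_e 3) (carry 3) > 0"
proof (rule cmi_pos[OF fin_abcd, of _ 9 _ 0 _ 0])
  show "dprob abcd (\<lambda>w. digit_a 3 w = 9 \<and> digit_e 3 w = 0 \<and> carry 3 w = 0) = 0"
  proof (rule dprob_zero[OF fin_abcd])
    fix w :: "nat \<times> nat \<times> nat \<times> nat"
    obtain a b c d where w: "w = (a,b,c,d)" by (cases w) auto
    show "\<not> (digit_a 3 w = 9 \<and> digit_e 3 w = 0 \<and> carry 3 w = 0)"
      using carry_zero[of 1 a b c d] unfolding w
      by (auto simp: digit_a_def digit_e_def carry_def var_a_def var_e_def)
  qed
  show "dprob abcd (\<lambda>w. digit_a 3 w = 9 \<and> carry 3 w = 0) > 0"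
    by (rule dprob_pos[OF fin_abcd, of "(9,0,0,0)"])
       (simp_all add: set_abcd inOm digit_a_def carry_def var_a_def)
  show "dprob abcd (\<lambda>w. digit_e 3 w = 0 \<and> carry 3 w = 0) > 0"
    by (rule dprob_pos[OF fin_abcd, of "(0,0,0,0)"])
       (simp_all add: set_abcd inOm digit_e_def carry_def var_e_def)
qed

lemma cmi2: "cond_mutual_info abcd (digit_a 2) (digit_e 2) (carry 2) > 0"
proof (rule cmi_pos[OF fin_abcd, of _ 9 _ 0 _ 0])
  show "dprob abcd (\<lambda>w. digit_a 2 w = 9 \<and> digit_e 2 w = 0 \<and> carry 2 w = 0) = 0"
  proof (rule dprob_zero[OF fin_abcd])
    fix w :: "nat \<times> nat \<times> nat \<times> nat"
    obtain a b c d where w: "w = (a,b,c,d)" by (cases w) auto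
    show "\<not> (digit_a 2 w = 9 \<and> digit_e 2 w = 0 \<and> carry 2 w = 0)"
      using carry_zero[of 10 a b c d] unfolding w
      by (auto simp: digit_a_def digit_e_def carry_def var_a_def var_e_def)
  qed
  show "dprob abcd (\<lambda>w. digit_a 2 w = 9 \<and> carry 2 w = 0) > 0"
    by (rule dprob_pos[OF fin_abcd, of "(90,0,0,0)"])
       (simp_all add: set_abcd inOm digit_a_def carry_def var_a_def)
  show "dprob abcd (\<lambda>w. digit_e 2 w = 0 \<and> carry 2 w = 0) > 0"
    by (rule dprob_pos[OF fin_abcd, of "(0,0,0,0)"])
       (simp_all add: set_abcd inOm digit_e_def carry_def var_e_def)
qed

lemma cmi1: "cond_mutual_info abcd (digit_a 1) (digit_e 1) (carry 1) > 0"
proof (rule cmi_pos[OF fin_abcd, of _ 9 _ 0 _ 0])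
  show "dprob abcd (\<lambda>w. digit_a 1 w = 9 \<and> digit_e 1 w = 0 \<and> carry 1 w = 0) = 0"
  proof (rule dprob_zero[OF fin_abcd])
    fix w :: "nat \<times> nat \<times> nat \<times> nat"
    obtain a b c d where w: "w = (a,b,c,d)" by (cases w) auto
    show "\<not> (digit_a 1 w = 9 \<and> digit_e 1 w = 0 \<and> carry 1 w = 0)"
      using carry_zero[of 100 a b c d] unfolding w
      by (auto simp: digit_a_def digit_e_def carry_def var_a_def var_e_def)
  qed
  show "dprob abcd (\<lambda>w. digit_a 1 w = 9 \<and> carry 1 w = 0) > 0"
    by (rule dprob_pos[OF fin_abcd, of "(900,0,0,0)"])
       (simp_all add: set_abcd inOm digit_a_def carry_def var_a_def)
  show "dprob abcd (\<lambda>w. digit_e 1 w = 0 \<and> carry 1 w = 0) > 0"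
    by (rule dprob_pos[OF fin_abcd, of "(0,0,0,0)"])
       (simp_all add: set_abcd inOm digit_e_def carry_def var_e_def)
qed


definition A0 where "A0 = {w\<in>Om. digit_a 1 w = 0 \<and> digit_e 0 w = 3}"
definition A9 where "A9 = {w\<in>Om. digit_a 1 w = 9 \<and> digit_e 0 w = 3}"

definition sh :: "nat \<times> nat \<times> nat \<times> nat \<Rightarrow> nat \<times> nat \<times> nat \<times> nat" where
  "sh w = (case w of (a,b,c,d) \<Rightarrow> (a + 900, b, c, d))"

lemma card_A0_A9: "card A0 < card A9"
proof -
  have inj: "inj_on sh A0" by (rule inj_onI) (auto simp: sh_def split: prod.splits)
  have sub: "sh ` A0 \<subseteq> A9"
  proof
    fix v assume "v \<in> sh ` A0"
    then obtain a b c d where v: "v = sh (a,b,c,d)" and w: "(a,b,c,d) \<in> A0" by auto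
    have h: "a < 1000" "b < 1000" "c < 1000" "d < 1000" "a div 100 mod 10 = 0" "(a+b+c+d) div 1000 = 3"
      using w by (simp_all add: A0_def inOm digit_a_def digit_e_def var_a_def var_e_def)
    have a1: "a < 100" using h(5) da1[OF h(1), of 0] by simp
    have a2: "(a + 900) div 100 mod 10 = 9" using da1[of "a+900" 9] a1 by simp
    have e2: "(a + 900 + b + c + d) div 1000 = 3" using h(6) h(2-4) a1 by (simp add: div_eq_iff)
    show "v \<in> A9" using v a1 a2 e2 h(2-4)
      by (simp add: A9_def sh_def inOm digit_a_def digit_e_def var_a_def var_e_def)
  qed
  have m9: "(900,999,999,999) \<in> A9"
    by (simp add: A9_def inOm digit_a_def digit_e_def var_a_def var_e_def)
  have nm: "(900,999,999,999) \<notin> sh ` A0"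
  proof
    assume "(900,999,999,999) \<in> sh ` A0"
    then obtain a b c d where v: "(900,999,999,999) = sh (a,b,c,d)" and w: "(a,b,c,d) \<in> A0" by auto
    then show False by (simp add: A0_def sh_def digit_e_def var_e_def div_eq_iff)
  qed
  have "sh ` A0 \<subset> A9" using sub m9 nm by blast
  moreover have "finite A9" by (simp add: A9_def finOm)
  ultimately have "card (sh ` A0) < card A9" by (rule psubset_card_mono[rotated])
  then show ?thesis using card_image[OF inj] by simp
qed

lemma cardU0: "{a\<in>U. a div 100 mod 10 = (0::nat)} = {0..<100}"
proof (rule set_eqI)
  fix a :: nat
  show "a \<in> {a\<in>U. a div 100 mod 10 = 0} \<longleftrightarrow> a \<in> {0..<100}"
  proof (cases "a < 1000")
    case True then show ?thesis using da1[OF True, of 0] by (simp add: U_def)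
  qed (simp add: U_def)
qed
lemma cardU9: "{a\<in>U. a div 100 mod 10 = (9::nat)} = {900..<1000}"
proof (rule set_eqI)
  fix a :: nat
  show "a \<in> {a\<in>U. a div 100 mod 10 = 9} \<longleftrightarrow> a \<in> {900..<1000}"
  proof (cases "a < 1000")
    case True then show ?thesis using da1[OF True, of 9] by (simp add: U_def)
  qed (simp add: U_def)
qed

lemma pa_eq: "dprob abcd (\<lambda>w. digit_a 1 w = 0) = dprob abcd (\<lambda>w. digit_a 1 w = 9)"
proof -
  have "\<And>x. dprob abcd (\<lambda>w. digit_a 1 w = x) = real (card {a\<in>U. a div 100 mod 10 = x} * 1000 * 10^6) / 10^12"
    using count_indep[of "\<lambda>a. a div 100 mod 10 = _" "\<lambda>_. True"]
    by (simp add: dprob_abcd digit_a_def cardU)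
  then have h0: "dprob abcd (\<lambda>w. digit_a 1 w = 0) = real (card {a\<in>U. a div 100 mod 10 = (0::nat)} * 1000 * 10^6) / 10^12"
    and h9: "dprob abcd (\<lambda>w. digit_a 1 w = 9) = real (card {a\<in>U. a div 100 mod 10 = (9::nat)} * 1000 * 10^6) / 10^12"
    by blast+
  have c0: "card {a\<in>U. a div 100 mod 10 = (0::nat)} = 100" unfolding cardU0 by simp
  have c9: "card {a\<in>U. a div 100 mod 10 = (9::nat)} = 100" unfolding cardU9 by simp
  show ?thesis unfolding h0 h9 c0 c9 ..
qed

lemma mi01: "mutual_info abcd (digit_a 1) (digit_e 0) > 0"
proof (cases "dprob abcd (\<lambda>w. digit_a 1 w = 0 \<and> digit_e 0 w = 3) =
      dprob abcd (\<lambda>w. digit_a 1 w = 0) * dprob abcd (\<lambda>w. digit_e 0 w = 3)")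
  case True
  have "dprob abcd (\<lambda>w. digit_a 1 w = 0 \<and> digit_e 0 w = 3) < dprob abcd (\<lambda>w. digit_a 1 w = 9 \<and> digit_e 0 w = 3)"
    using card_A0_A9 by (simp add: dprob_abcd A0_def A9_def divide_strict_right_mono)
  then have "dprob abcd (\<lambda>w. digit_a 1 w = 9 \<and> digit_e 0 w = 3) \<noteq>
      dprob abcd (\<lambda>w. digit_a 1 w = 9) * dprob abcd (\<lambda>w. digit_e 0 w = 3)"
    using True pa_eq by simp
  then show ?thesis by (rule mi_pos[OF fin_abcd])
next
  case False
  then show ?thesis by (rule mi_pos[OF fin_abcd])
qed

theorem theorem1:
  shows "mutual_info abcd (digit_a 1) (digit_e 0) > 0
    \<and> (\<forall>i\<in>{1,2,3}. \<forall>j\<in>{1,2,3}. mutual_info abcd (digit_a i) (digit_e j) = 0)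
    \<and> (\<forall>i\<in>{1,2,3}. cond_mutual_info abcd (digit_a i) (digit_e i) (carry i) > 0)"
  using mi01 part2 cmi1 cmi2 cmi3 by auto


end
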